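(* Let $\langle L,\leq\rangle$ and $\langle K,\leq\rangle$ be complete lattices and $f:L\to K$ a surjective lattice morphism. Let $O:L\to L$ be an operator and $A:L^2\to L^2$ an approximator of $O$ such that $O$ respects $f$ and $A$ respects $f$, and let $A_f:K^2\to K^2$ be the projection of $A$ on $K$. If $(x_j,y_j)_{j\leq\alpha}$ is a well-founded induction of $A$, then $(f(x_j),f(y_j))_{j\leq\alpha}$ is a well-founded induction of $A_f$. Moreover, if $(x_j,y_j)_{j\leq\alpha}$ is terminal, then so is $(f(x_j),f(y_j))_{j\leq\alpha}$.
   Context: A lattice morphism $f:L\to K$ satisfies $f(\bigvee X)=\bigvee f(X)$ and $f(\bigwedge X)=\bigwedge f(X)$ for all $X\subseteq L$. For a complete lattice $L$ with least element $\bot$ and greatest element $\top$, the bilattice $L^2$ carries the precision order $(x,y)\leq_p(u,v)$ iff $x\leq u$ and $v\leq y$; it is a complete lattice. Write $(x,y)_1=x$, $(x,y)_2=y$. An approximator of $O:L\to L$ is a $\leq_p$-monotone operator $A:L^2\to L^2$ with $A(x,x)_1\leq O(x)\leq A(x,x)_2$ for all $x$; approximators are assumed symmetric, i.e. $A(x,y)_1=A(y,x)_2$. An operator $O$ respects $f$ if $f(x)=f(y)$ implies $f(O(x))=f(O(y))$. Let $f^2:L^2\to K^2$, $(x,y)\mapsto(f(x),f(y))$. $A$ respects $f$ if for all $p,q\in L^2$ with $f^2(p)=f^2(q)$ we have $f^2(A(p))=f^2(A(q))$; in that case (with $f$ surjective) the projection $A_f$ is the unique operator $K^2\to K^2$ with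 $A_f\circ f^2=f^2\circ A$. For an operator $B$ on a bilattice $M^2$, a $B$-refinement of $(x,y)$ is a pair $(x',y')$ such that either (i) $(x,y)\leq_p(x',y')\leq_p B(x,y)$ (application refinement), or (ii) $x'=x$ and $B(x,y')_2\leq y'\leq y$ (unfoundedness refinement); it is strict if $(x',y')\neq(x,y)$. A well-founded induction of $B$ is a sequence $(x_i,y_i)_{i\leq\beta}$, $\beta$ an ordinal, with $(x_0,y_0)=(\bot,\top)$, $(x_{i+1},y_{i+1})$ a $B$-refinement of $(x_i,y_i)$ for all $i<\beta$, and $(x_\lambda,y_\lambda)=\bigvee_{\leq_p}\{(x_i,y_i)\mid i<\lambda\}$ for each limit ordinal $\lambda\leq\beta$. It is terminal if $(x_\beta,y_\beta)$ has no strict $B$-refinement. *)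

theory Defs
  imports Main
begin

definition lattice_morphism :: "('a::complete_lattice \<Rightarrow> 'b::complete_lattice) \<Rightarrow> bool" where
  "lattice_morphism f \<longleftrightarrow> (\<forall>X. f (Sup X) = Sup (f ` X) \<and> f (Inf X) = Inf (f ` X))"

definition leq_p :: "'a::complete_lattice \<times> 'a \<Rightarrow> 'a \<times> 'a \<Rightarrow> bool" where
  "leq_p p q \<longleftrightarrow> fst p \<le> fst q \<and> snd q \<le> snd p"

definition Sup_p :: "('a::complete_lattice \<times> 'a) set \<Rightarrow> 'a \<times> 'a" where
  "Sup_p S = (Sup (fst ` S), Inf (snd ` S))"

definition pmap :: "('a \<Rightarrow> 'b) \<Rightarrow> 'a \<times> 'a \<Rightarrow> 'b \<times> 'b" where
  "pmap f p = (f (fst p), f (snd p))"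

definition approximator ::
  "('a::complete_lattice \<Rightarrow> 'a) \<Rightarrow> ('a \<times> 'a \<Rightarrow> 'a \<times> 'a) \<Rightarrow> bool" where
  "approximator Op A \<longleftrightarrow>
     (\<forall>p q. leq_p p q \<longrightarrow> leq_p (A p) (A q)) \<and>
     (\<forall>x. fst (A (x, x)) \<le> Op x \<and> Op x \<le> snd (A (x, x))) \<and>
     (\<forall>x y. fst (A (x, y)) = snd (A (y, x)))"

definition op_respects :: "('a \<Rightarrow> 'a) \<Rightarrow> ('a \<Rightarrow> 'b) \<Rightarrow> bool" where
  "op_respects Op f \<longleftrightarrow> (\<forall>x y. f x = f y \<longrightarrow> f (Op x) = f (Op y))"

definition approx_respects :: "('a \<times> 'a \<Rightarrow> 'a \<times> 'a) \<Rightarrow> ('a \<Rightarrow> 'b) \<Rightarrow> bool" where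
  "approx_respects A f \<longleftrightarrow> (\<forall>p q. pmap f p = pmap f q \<longrightarrow> pmap f (A p) = pmap f (A q))"

definition refinement ::
  "('a::complete_lattice \<times> 'a \<Rightarrow> 'a \<times> 'a) \<Rightarrow> 'a \<times> 'a \<Rightarrow> 'a \<times> 'a \<Rightarrow> bool" where
  "refinement B p q \<longleftrightarrow>
     (leq_p p q \<and> leq_p q (B p)) \<or>
     (fst q = fst p \<and> snd (B (fst p, snd q)) \<le> snd q \<and> snd q \<le> snd p)"

definition strict_refinement ::
  "('a::complete_lattice \<times> 'a \<Rightarrow> 'a \<times> 'a) \<Rightarrow> 'a \<times> 'a \<Rightarrow> 'a \<times> 'a \<Rightarrow> bool" where
  "strict_refinement B p q \<longleftrightarrow> refinement B p q \<and> q \<noteq> p"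

text \<open>Ordinals are modelled by an index type of class wellorder: the sequence
  indexed by the ordinals \<open>\<le> \<beta>\<close> is \<open>s\<close> restricted to \<open>{i. i \<le> beta}\<close>.\<close>

definition ord_zero :: "'i::wellorder" where
  "ord_zero = (LEAST i. True)"

definition ord_succ :: "'i::wellorder \<Rightarrow> 'i" where
  "ord_succ i = (LEAST j. i < j)"

definition ord_limit :: "'i::wellorder \<Rightarrow> bool" where
  "ord_limit l \<longleftrightarrow> (\<exists>j. j < l) \<and> (\<forall>j. j < l \<longrightarrow> (\<exists>k. j < k \<and> k < l))"

definition wf_induction ::
  "('a::complete_lattice \<times> 'a \<Rightarrow> 'a \<times> 'a) \<Rightarrow> ('i::wellorder \<Rightarrow> 'a \<times> 'a) \<Rightarrow> 'i \<Rightarrow> bool" where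
  "wf_induction B s beta \<longleftrightarrow>
     s ord_zero = (bot, top) \<and>
     (\<forall>i. i < beta \<longrightarrow> refinement B (s i) (s (ord_succ i))) \<and>
     (\<forall>l. l \<le> beta \<and> ord_limit l \<longrightarrow> s l = Sup_p (s ` {i. i < l}))"

definition terminal_wf_induction ::
  "('a::complete_lattice \<times> 'a \<Rightarrow> 'a \<times> 'a) \<Rightarrow> ('i::wellorder \<Rightarrow> 'a \<times> 'a) \<Rightarrow> 'i \<Rightarrow> bool" where
  "terminal_wf_induction B s beta \<longleftrightarrow>
     wf_induction B s beta \<and> \<not> (\<exists>q. strict_refinement B (s beta) q)"

end

theory Submission
  imports Defs
begin

lemma lm_sup: "lattice_morphism f \<Longrightarrow> f (sup a b) = sup (f a) (f b)"
  unfolding lattice_morphism_def by (metis Sup_insert Sup_empty image_insert image_empty sup_bot.right_neutral)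

lemma lm_inf: "lattice_morphism f \<Longrightarrow> f (inf a b) = inf (f a) (f b)"
  unfolding lattice_morphism_def by (metis Inf_insert Inf_empty image_insert image_empty inf_top.right_neutral)

lemma lm_mono: "lattice_morphism f \<Longrightarrow> a \<le> b \<Longrightarrow> f a \<le> f b"
  by (metis lm_sup sup.absorb_iff2)

lemma lm_bot: "lattice_morphism f \<Longrightarrow> f bot = bot"
  unfolding lattice_morphism_def by (metis Sup_empty image_empty)

lemma lm_top: "lattice_morphism f \<Longrightarrow> f top = top"
  unfolding lattice_morphism_def by (metis Inf_empty image_empty)

lemma trich:
  fixes i :: "'i::wellorder"
  shows "i = ord_zero \<or> (\<exists>j. j < i \<and> ord_succ j = i) \<or> ord_limit i"
proof -
  { assume nz: "i \<noteq> ord_zero" and ns: "\<not> (\<exists>j. j < i \<and> ord_succ j = i)"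
    have "ord_zero \<le> i" unfolding ord_zero_def by (rule Least_le) simp
    with nz have "ord_zero < i" by simp
    moreover have "\<forall>j. j < i \<longrightarrow> (\<exists>k. j < k \<and> k < i)"
    proof (intro allI impI, rule ccontr)
      fix j assume ji: "j < i" and nk: "\<not> (\<exists>k. j < k \<and> k < i)"
      have "ord_succ j = i" unfolding ord_succ_def
        by (rule Least_equality) (use ji nk in \<open>auto simp: not_less\<close>, metis not_le)
      with ji ns show False by blast
    qed
    ultimately have "ord_limit i" unfolding ord_limit_def by blast }
  then show ?thesis by blast
qed

lemma invariant:
  fixes s :: "'i::wellorder \<Rightarrow> 'a::complete_lattice \<times> 'a"
  assumes mono: "\<And>p q. leq_p p q \<Longrightarrow> leq_p (A p) (A q)"
    and wf: "wf_induction A s alpha"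
  shows "i \<le> alpha \<Longrightarrow> fst (s i) \<le> fst (A (s i)) \<and> snd (A (s i)) \<le> snd (s i)"
proof (induction i rule: less_induct)
  case (less i)
  note wfd = wf[unfolded wf_induction_def]
  consider "i = ord_zero" | j where "j < i" "ord_succ j = i" | "ord_limit i"
    using trich by blast
  then show ?case
  proof cases
    case 1 then show ?thesis using wfd by simp
  next
    case 2
    have r: "refinement A (s j) (s i)" using wfd 2 less.prems by auto
    have ih: "fst (s j) \<le> fst (A (s j)) \<and> snd (A (s j)) \<le> snd (s j)"
      using less.IH[of j] 2 less.prems by simp
    from r show ?thesis unfolding refinement_def
    proof
      assume a: "leq_p (s j) (s i) \<and> leq_p (s i) (A (s j))"
      then have "leq_p (A (s j)) (A (s i))" using mono by blast
      with a show ?thesis unfolding leq_p_def by (meson order_trans)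
    next
      assume a: "fst (s i) = fst (s j) \<and> snd (A (fst (s j), snd (s i))) \<le> snd (s i) \<and> snd (s i) \<le> snd (s j)"
      have e: "(fst (s j), snd (s i)) = s i" using a by (metis prod.collapse)
      have "leq_p (s j) (s i)" using a unfolding leq_p_def by simp
      then have "leq_p (A (s j)) (A (s i))" using mono by blast
      with a e ih show ?thesis unfolding leq_p_def by (metis order_trans)
    qed
  next
    case 3
    have si: "s i = Sup_p (s ` {j. j < i})" using wfd 3 less.prems by auto
    have le: "leq_p (s j) (s i)" if "j < i" for j
      using that unfolding si Sup_p_def leq_p_def
      by (auto intro: Sup_upper Inf_lower)
    have ih: "fst (s j) \<le> fst (A (s j)) \<and> snd (A (s j)) \<le> snd (s j)" if "j < i" for j
      using less.IH[of j] that less.prems by simp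
    have A1: "fst (s j) \<le> fst (A (s i))" if "j < i" for j
      using ih[OF that] mono[OF le[OF that]] unfolding leq_p_def by (meson order_trans)
    have A2: "snd (A (s i)) \<le> snd (s j)" if "j < i" for j
      using ih[OF that] mono[OF le[OF that]] unfolding leq_p_def by (meson order_trans)
    have "fst (s i) \<le> fst (A (s i))"
      apply (subst (1) si) unfolding Sup_p_def using A1 by (auto intro!: Sup_least)
    moreover have "snd (A (s i)) \<le> snd (s i)"
      apply (subst (2) si) unfolding Sup_p_def using A2 by (auto intro!: Inf_greatest)
    ultimately show ?thesis by simp
  qed
qed


lemma comm: "Af \<circ> pmap f = pmap f \<circ> A \<Longrightarrow> Af (pmap f p) = pmap f (A p)"
  by (metis comp_apply)

lemma ref_map:
  assumes lm: "lattice_morphism f" and c: "Af \<circ> pmap f = pmap f \<circ> A"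
    and r: "refinement A p q"
  shows "refinement Af (pmap f p) (pmap f q)"
  using r[unfolded refinement_def]
proof
  assume a: "leq_p p q \<and> leq_p q (A p)"
  have "leq_p (pmap f p) (pmap f q) \<and> leq_p (pmap f q) (pmap f (A p))"
    using a lm_mono[OF lm] unfolding leq_p_def pmap_def by simp
  then show ?thesis using comm[OF c] unfolding refinement_def by simp
next
  assume a: "fst q = fst p \<and> snd (A (fst p, snd q)) \<le> snd q \<and> snd q \<le> snd p"
  have "Af (fst (pmap f p), snd (pmap f q)) = pmap f (A (fst p, snd q))"
    using comm[OF c, of "(fst p, snd q)"] by (simp add: pmap_def)
  then show ?thesis using a lm_mono[OF lm] unfolding pmap_def refinement_def by auto
qed

lemma sup_map:
  assumes lm: "lattice_morphism f"
  shows "pmap f (Sup_p S) = Sup_p (pmap f ` S)"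
  using lm unfolding lattice_morphism_def pmap_def Sup_p_def
  by (simp add: image_image)

lemma lift:
  assumes lm: "lattice_morphism f" and su: "surj f"
    and c: "Af \<circ> pmap f = pmap f \<circ> A" and ar: "approx_respects A f"
    and mono: "\<And>p q. leq_p p q \<Longrightarrow> leq_p (A p) (A q)"
    and i1: "fst p \<le> fst (A p)" and i2: "snd (A p) \<le> snd p"
    and sr: "strict_refinement Af (pmap f p) q"
  shows "\<exists>q'. strict_refinement A p q'"
proof -
  obtain x y where p: "p = (x, y)" by fastforce
  obtain u v where q: "q = (u, v)" by fastforce
  obtain a b where ab: "A p = (a, b)" by fastforce
  obtain u0 where u0: "f u0 = u" using su by (metis surjD)
  obtain v0 where v0: "f v0 = v" using su by (metis surjD)
  have Afp: "Af (f x, f y) = (f a, f b)"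
    using comm[OF c, of p] p ab by (simp add: pmap_def)
  have ne: "(u, v) \<noteq> (f x, f y)" using sr p q unfolding strict_refinement_def pmap_def by simp
  have mf: "\<And>a b. a \<le> b \<Longrightarrow> f a \<le> f b" using lm_mono[OF lm] .
  from sr[unfolded strict_refinement_def refinement_def] p q
  have "(leq_p (f x, f y) (u, v) \<and> leq_p (u, v) (Af (f x, f y))) \<or>
        (u = f x \<and> snd (Af (f x, v)) \<le> v \<and> v \<le> f y)"
    by (simp add: pmap_def)
  then show ?thesis
  proof
    assume h: "leq_p (f x, f y) (u, v) \<and> leq_p (u, v) (Af (f x, f y))"
    then have h1: "f x \<le> u" "u \<le> f a" "f b \<le> v" "v \<le> f y"
      using Afp unfolding leq_p_def by auto
    define x' where "x' = inf (sup x u0) a"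
    define y' where "y' = inf (sup b v0) y"
    have xa: "x \<le> a" "b \<le> y" using i1 i2 p ab by auto
    have fx': "f x' = u" unfolding x'_def lm_inf[OF lm] lm_sup[OF lm] u0
      using h1 by (simp add: sup.absorb2 inf.absorb1)
    have fy': "f y' = v" unfolding y'_def lm_inf[OF lm] lm_sup[OF lm] v0
      using h1 by (simp add: sup.absorb2 inf.absorb1)
    have "refinement A p (x', y')"
      unfolding refinement_def leq_p_def p using xa ab p
      by (auto simp: x'_def y'_def le_infI1 le_infI2)
    moreover have "(x', y') \<noteq> p" using ne fx' fy' p by auto
    ultimately show ?thesis unfolding strict_refinement_def by blast
  next
    assume h: "u = f x \<and> snd (Af (f x, v)) \<le> v \<and> v \<le> f y"
    define T where "T = {z. z \<le> y \<and> f z \<le> v}"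
    define w where "w = Sup T"
    have wy: "w \<le> y" unfolding w_def T_def by (auto intro: Sup_least)
    have fw1: "f w \<le> v" unfolding w_def lattice_morphism_def using lm
      unfolding lattice_morphism_def T_def by (auto intro!: Sup_least)
    have "inf v0 y \<in> T" unfolding T_def using lm_inf[OF lm] v0 h by simp
    then have "inf v0 y \<le> w" unfolding w_def by (rule Sup_upper)
    then have "f (inf v0 y) \<le> f w" by (rule mf)
    then have "v \<le> f w" using lm_inf[OF lm] v0 h by (simp add: inf.absorb1)
    with fw1 have fw: "f w = v" by simp
    define g where "g z = snd (A (x, z))" for z
    have pm: "pmap f (x, w) = pmap f (x, v0)" using fw v0 by (simp add: pmap_def)
    have "f (g w) = f (g v0)" using ar[unfolded approx_respects_def, rule_format, OF pm]
      by (simp add: g_def pmap_def)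
    also have "\<dots> = snd (Af (f x, v))"
      using comm[OF c, of "(x, v0)"] v0 by (simp add: pmap_def g_def)
    finally have fg: "f (g w) \<le> v" using h by simp
    have "leq_p (x, y) (x, w)" using wy unfolding leq_p_def by simp
    then have "leq_p (A (x, y)) (A (x, w))" by (rule mono)
    then have "g w \<le> b" unfolding g_def leq_p_def using ab p by simp
    then have "g w \<le> y" using i2 ab p by simp
    with fg have "g w \<in> T" unfolding T_def by simp
    then have gw: "g w \<le> w" unfolding w_def by (rule Sup_upper)
    have "refinement A p (x, w)" unfolding refinement_def p using gw wy g_def by simp
    moreover have "(x, w) \<noteq> p" using ne fw p h by auto
    ultimately show ?thesis unfolding strict_refinement_def by blast
  qed
qed

theorem proposition3p3:
  fixes f :: "'a::complete_lattice \<Rightarrow> 'b::complete_lattice"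
    and Op :: "'a \<Rightarrow> 'a"
    and A :: "'a \<times> 'a \<Rightarrow> 'a \<times> 'a"
    and Af :: "'b \<times> 'b \<Rightarrow> 'b \<times> 'b"
    and s :: "'i::wellorder \<Rightarrow> 'a \<times> 'a"
    and alpha :: "'i"
  assumes "lattice_morphism f" and "surj f"
    and "approximator Op A"
    and "op_respects Op f" and "approx_respects A f"
    and "Af \<circ> pmap f = pmap f \<circ> A"
    and "wf_induction A s alpha"
  shows "wf_induction Af (pmap f \<circ> s) alpha \<and>
         (terminal_wf_induction A s alpha \<longrightarrow> terminal_wf_induction Af (pmap f \<circ> s) alpha)"
proof -
  note lm = assms(1) and c = assms(6) and wf = assms(7)
  have mono: "\<And>p q. leq_p p q \<Longrightarrow> leq_p (A p) (A q)"
    using assms(3) unfolding approximator_def by blast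
  note wfd = wf[unfolded wf_induction_def]
  have W: "wf_induction Af (pmap f \<circ> s) alpha"
    unfolding wf_induction_def
  proof (intro conjI allI impI)
    show "(pmap f \<circ> s) ord_zero = (bot, top)"
      using wfd lm_bot[OF lm] lm_top[OF lm] by (simp add: pmap_def)
  next
    fix i assume "i < alpha"
    then show "refinement Af ((pmap f \<circ> s) i) ((pmap f \<circ> s) (ord_succ i))"
      using wfd ref_map[OF lm c] by simp
  next
    fix l assume "l \<le> alpha \<and> ord_limit l"
    then show "(pmap f \<circ> s) l = Sup_p ((pmap f \<circ> s) ` {i. i < l})"
      using wfd sup_map[OF lm] by (simp add: image_comp)
  qed
  moreover have "terminal_wf_induction Af (pmap f \<circ> s) alpha"
    if t: "terminal_wf_induction A s alpha"
  proof -
    have inv: "fst (s alpha) \<le> fst (A (s alpha)) \<and> snd (A (s alpha)) \<le> snd (s alpha)"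
      using invariant[OF mono wf] by simp
    have "\<not> (\<exists>q. strict_refinement Af (pmap f (s alpha)) q)"
      using lift[OF lm assms(2) c assms(5) mono] inv t
      unfolding terminal_wf_induction_def by blast
    then show ?thesis using W unfolding terminal_wf_induction_def by simp
  qed
  ultimately show ?thesis by blast
qed

end
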